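(* Let $b>1$, $p\ge1$, $R\subseteq\{0,\ldots,p-1\}$, $I\subseteq\mathbb{N}$ finite and non-empty, and let $k$ be the greatest divisor of $p$ coprime with $b$. Let $(s,t)$ and $(s',t')$ be two states of $\mathcal{C}_{R,p,I}$ with $s\equiv s'\pmod k$. If neither $(s,t)$ nor $(s',t')$ is the initial state, then $(s,t)$ and $(s',t')$ are ultimately-equivalent.
   Context: $A_b=\{0,\ldots,b-1\}$. $\mathcal{A}_{R,p}$: states $\{0,\ldots,p-1\}$, initial $0$, final $R$, transitions $n\xrightarrow{a}(nb+a)\bmod p$. With $m=\max I$, $\mathcal{B}_I$: states $\{0,\ldots,m\}\cup\{\bot\}$, initial $0$, final $I$, transitions $i\xrightarrow{a}ib+a$ if $ib+a\le m$, else $i\xrightarrow{a}\bot$, and $\bot\xrightarrow{a}\bot$. $\mathcal{C}_{R,p,I}$ is the accessible part (states reachable from the initial state $(0,0)$) of the product of $\mathcal{A}_{R,p}$ and $\mathcal{B}_I$, with componentwise transitions and $(s,t)$ final iff exactly one of $s\in R$, $t\in I$ holds. Two states $x,y$ are ultimately-equivalent if there is $m\ge1$ with $x\cdot u=y\cdot u$ for all words $u$ with $|u|\ge m$ ($x\cdot u$ = state reached from $x$ reading $u$). *)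

theory Defs
  imports Main
begin

definition words :: "nat \<Rightarrow> nat list set" where
  "words b = {u. set u \<subseteq> {0..<b}}"

definition A_step :: "nat \<Rightarrow> nat \<Rightarrow> nat \<Rightarrow> nat \<Rightarrow> nat" where
  "A_step b p n a = (n * b + a) mod p"

(* B_I: states {0..max I} plus bottom (None) *)
definition B_step :: "nat \<Rightarrow> nat set \<Rightarrow> nat option \<Rightarrow> nat \<Rightarrow> nat option" where
  "B_step b I t a = (case t of None \<Rightarrow> None
      | Some i \<Rightarrow> (if i * b + a \<le> Max I then Some (i * b + a) else None))"

definition C_step :: "nat \<Rightarrow> nat \<Rightarrow> nat set \<Rightarrow> nat \<times> nat option \<Rightarrow> nat \<Rightarrow> nat \<times> nat option" where
  "C_step b p I x a = (A_step b p (fst x) a, B_step b I (snd x) a)"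

definition C_run :: "nat \<Rightarrow> nat \<Rightarrow> nat set \<Rightarrow> nat \<times> nat option \<Rightarrow> nat list \<Rightarrow> nat \<times> nat option" where
  "C_run b p I x u = foldl (C_step b p I) x u"

definition C_init :: "nat \<times> nat option" where
  "C_init = (0, Some 0)"

(* states of C_{R,p,I}: accessible part of the product *)
definition C_states :: "nat \<Rightarrow> nat \<Rightarrow> nat set \<Rightarrow> (nat \<times> nat option) set" where
  "C_states b p I = {C_run b p I C_init u | u. u \<in> words b}"

definition C_final :: "nat set \<Rightarrow> nat set \<Rightarrow> (nat \<times> nat option) set" where
  "C_final R I = {(s, t). (s \<in> R) \<noteq> (case t of Some i \<Rightarrow> i \<in> I | None \<Rightarrow> False)}"

definition ult_equiv :: "nat \<Rightarrow> nat \<Rightarrow> nat set \<Rightarrow> nat \<times> nat option \<Rightarrow> nat \<times> nat option \<Rightarrow> bool" where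
  "ult_equiv b p I x y = (\<exists>m\<ge>1. \<forall>u \<in> words b. length u \<ge> m \<longrightarrow> C_run b p I x u = C_run b p I y u)"

definition coprime_part :: "nat \<Rightarrow> nat \<Rightarrow> nat" where
  "coprime_part b p = (GREATEST d. d dvd p \<and> coprime d b)"

end

theory Submission
  imports Defs "HOL-Computational_Algebra.Primes"
begin

lemma run_fst: "fst (foldl (C_step b p I) x u) = foldl (A_step b p) (fst x) u"
  by (induction u arbitrary: x) (auto simp: C_step_def)

lemma run_snd: "snd (foldl (C_step b p I) x u) = foldl (B_step b I) (snd x) u"
  by (induction u arbitrary: x) (auto simp: C_step_def)

lemma A_fold: "foldl (A_step b p) s u mod p = (s * b ^ length u + foldl (\<lambda>n a. n*b+a) 0 u) mod p"
proof (induction u rule: rev_induct)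
  case Nil then show ?case by simp
next
  case (snoc a u)
  have "foldl (A_step b p) s (u @ [a]) mod p = ((foldl (A_step b p) s u) * b + a) mod p"
    by (simp add: A_step_def)
  also have "... = ((foldl (A_step b p) s u mod p) * b + a) mod p"
    by (metis mod_add_left_eq mod_mult_left_eq)
  also have "... = ((s * b ^ length u + foldl (\<lambda>n a. n*b+a) 0 u) mod p * b + a) mod p"
    using snoc by simp
  also have "... = ((s * b ^ length u + foldl (\<lambda>n a. n*b+a) 0 u) * b + a) mod p"
    by (metis mod_add_left_eq mod_mult_left_eq)
  also have "... = (s * b ^ length (u@[a]) + foldl (\<lambda>n a. n*b+a) 0 (u@[a])) mod p"
    by (simp add: algebra_simps)
  finally show ?case .
qed

lemma A_lt: "p > 0 \<Longrightarrow> u \<noteq> [] \<Longrightarrow> foldl (A_step b p) s u < p"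
  by (induction u rule: rev_induct) (auto simp: A_step_def)

lemma B_Some: "B_step b I (Some i) a = (if i * b + a \<le> Max I then Some (i * b + a) else None)"
  by (simp add: B_step_def)

lemma B_None: "foldl (B_step b I) None u = None"
  by (induction u) (auto simp: B_step_def)

lemma B_grow: "foldl (B_step b I) (Some i) u = Some j \<Longrightarrow> j \<ge> i * b ^ length u"
proof (induction u arbitrary: i)
  case Nil then show ?case by simp
next
  case (Cons a u)
  show ?case
  proof (cases "i * b + a \<le> Max I")
    case True
    then have "foldl (B_step b I) (Some (i*b+a)) u = Some j" using Cons.prems by (simp add: B_Some)
    then have "j \<ge> (i*b+a) * b ^ length u" using Cons.IH by blast
    moreover have "(i*b+a) * b ^ length u \<ge> i * b ^ length (a#u)" by simp
    ultimately show ?thesis by linarith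
  next
    case False
    then show ?thesis using Cons.prems by (simp add: B_Some B_None)
  qed
qed

lemma B_bound: "u \<noteq> [] \<Longrightarrow> foldl (B_step b I) t u = Some j \<Longrightarrow> j \<le> Max I"
proof (induction u arbitrary: t)
  case Nil then show ?case by simp
next
  case (Cons a u)
  show ?case
  proof (cases "u = []")
    case True
    then show ?thesis using Cons.prems by (auto simp: B_step_def split: option.splits if_splits)
  next
    case False
    then show ?thesis using Cons by simp
  qed
qed

lemma init_only: "b > 0 \<Longrightarrow> foldl (C_step b p I) (0, Some 0) u = (s, Some 0) \<Longrightarrow> s = 0"
proof (induction u)
  case Nil then show ?case by simp
next
  case (Cons a u)
  show ?case
  proof (cases "a = 0")
    case True
    then have "C_step b p I (0, Some 0) a = (0, Some 0)" by (simp add: C_step_def A_step_def B_step_def)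
    then show ?thesis using Cons by simp
  next
    case False
    have "snd (foldl (C_step b p I) (0, Some 0) (a#u)) = Some 0" using Cons.prems by simp
    then have h: "foldl (B_step b I) (B_step b I (Some 0) a) u = Some 0" by (simp add: run_snd C_step_def)
    show ?thesis
    proof (cases "a \<le> Max I")
      case True
      then have "foldl (B_step b I) (Some a) u = Some 0" using h by (simp add: B_Some)
      from B_grow[OF this] have "0 \<ge> a * b ^ length u" .
      moreover have "b ^ length u > 0" using Cons.prems(1) by simp
      ultimately show ?thesis using False by simp
    next
      case False
      then show ?thesis using h by (simp add: B_Some B_None)
    qed
  qed
qed



lemma gcd_chain:
  fixes p b :: nat assumes "p > 0"
  shows "\<exists>n. gcd p (b^n) = gcd p (b^Suc n)"
proof (rule ccontr)
  assume "\<not> ?thesis"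
  then have ne: "\<And>n. gcd p (b^n) \<noteq> gcd p (b^Suc n)" by blast
  have dv: "\<And>n. gcd p (b^n) dvd gcd p (b^Suc n)"
    by (simp add: gcd_mono)
  have "gcd p (b^n) \<ge> n + 1" for n
  proof (induction n)
    case 0 then show ?case using assms by simp
  next
    case (Suc n)
    have "gcd p (b^n) \<le> gcd p (b^Suc n)"
      using dv[of n] assms by (simp add: dvd_imp_le)
    then show ?case using ne[of n] Suc by simp
  qed
  from this[of p] have "gcd p (b^p) > p" by simp
  moreover have "gcd p (b^p) \<le> p" using assms by (simp add: dvd_imp_le)
  ultimately show False by simp
qed

lemma split_p:
  fixes p b :: nat assumes "p > 0"
  shows "\<exists>n. coprime_part b p * gcd p (b^n) = p"
proof -
  obtain n where n: "gcd p (b^n) = gcd p (b^Suc n)" using gcd_chain[OF assms] by blast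
  define g where "g = gcd p (b^n)"
  define d where "d = p div g"
  have gp: "g dvd p" unfolding g_def by (rule gcd_dvd1)
  have g0: "g > 0" using assms unfolding g_def by simp
  have pd: "p = g * d" using gp unfolding d_def by simp
  have cop: "coprime d b"
  proof -
    define c where "c = gcd d b"
    have "c dvd d" unfolding c_def by (rule gcd_dvd1)
    then have "g * c dvd p" using pd by (metis mult_dvd_mono dvd_refl)
    moreover have "g * c dvd b ^ n * b"
      by (rule mult_dvd_mono) (simp_all add: c_def g_def)
    ultimately have "g * c dvd gcd p (b ^ n * b)" by (rule gcd_greatest)
    then have "g * c dvd g" using n unfolding g_def by (simp only: power_Suc2)
    then have "g * c dvd g * 1" by simp
    then have "c dvd 1" using g0 by (metis nat_mult_dvd_cancel_disj not_gr0)
    then show ?thesis by (simp add: c_def coprime_iff_gcd_eq_1)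
  qed
  let ?P = "\<lambda>d. d dvd p \<and> coprime d b"
  have bound: "\<And>y. ?P y \<Longrightarrow> y \<le> p" using assms by (auto intro: dvd_imp_le)
  have P1: "?P 1" by simp
  have Pk: "?P (coprime_part b p)" unfolding coprime_part_def
    using GreatestI_nat[where P="?P", OF P1 bound] .
  have Pd: "?P d" using cop pd by simp
  have dk: "d \<le> coprime_part b p" unfolding coprime_part_def
    using Greatest_le_nat[where P="?P", OF Pd bound] .
  have "coprime (coprime_part b p) g"
  proof -
    have "coprime (coprime_part b p) (b^n)" using Pk by simp
    moreover have "g dvd b^n" unfolding g_def by (rule gcd_dvd2)
    ultimately show ?thesis using coprime_divisors dvd_refl by blast
  qed
  then have kg: "coprime_part b p * g dvd p" using Pk gp divides_mult by blast
  then have "coprime_part b p * g \<le> p" using assms by (rule dvd_imp_le)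
  moreover have "p \<le> coprime_part b p * g" using dk pd by simp
  ultimately show ?thesis unfolding g_def by (intro exI[of _ n]) simp
qed


lemma B_dies:
  assumes "b > 1" "t \<noteq> Some 0" "length w > Max I"
  shows "foldl (B_step b I) t w = None"
proof (cases t)
  case None then show ?thesis by (simp add: B_None)
next
  case (Some i)
  with assms have i1: "i \<ge> 1" by (cases i) auto
  show ?thesis
  proof (rule ccontr)
    assume "foldl (B_step b I) t w \<noteq> None"
    then obtain j where j: "foldl (B_step b I) t w = Some j" by blast
    have wne: "w \<noteq> []" using assms(3) by auto
    have "j \<le> Max I" using B_bound[OF wne j] .
    moreover have "j \<ge> i * b ^ length w" using B_grow j Some by blast
    moreover have "i * b ^ length w \<ge> b ^ length w" using i1 by simp
    moreover have "b ^ length w \<ge> 2 ^ length w" using assms(1) by (simp add: power_mono)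
    moreover have "2 ^ length w > length w" by (rule less_exp)
    ultimately show False using assms(3) by linarith
  qed
qed

lemma A_eq:
  fixes s s' k g p b n L :: nat
  assumes "k * g = p" "g dvd b ^ n" "s mod k = s' mod k" "L \<ge> n"
  shows "s * b ^ L mod p = s' * b ^ L mod p"
proof -
  have "int s mod int k = int s' mod int k" using assms(3) by (metis of_nat_mod)
  then have h1: "int k dvd int s - int s'" by (simp add: mod_eq_dvd_iff)
  have "b ^ n dvd b ^ L" using assms(4) by (simp add: le_imp_power_dvd)
  then have "g dvd b ^ L" using assms(2) by (rule dvd_trans[rotated])
  then have h2: "int g dvd int (b ^ L)" by (simp only: of_nat_dvd_iff)
  have "int k * int g dvd (int s - int s') * int (b ^ L)" using h1 h2 by (rule mult_dvd_mono)
  moreover have "int k * int g = int p" using assms(1) by (metis of_nat_mult)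
  ultimately have "int p dvd int (s * b ^ L) - int (s' * b ^ L)"
    by (simp add: algebra_simps)
  then have "int (s * b ^ L) mod int p = int (s' * b ^ L) mod int p" by (simp add: mod_eq_dvd_iff)
  then show ?thesis by (metis of_nat_mod of_nat_eq_iff)
qed

lemma run_pair: "C_run b p I x w = (foldl (A_step b p) (fst x) w, foldl (B_step b I) (snd x) w)"
  unfolding C_run_def by (metis run_fst run_snd prod.collapse)

lemma not_some0:
  assumes "b > 0" "(s, t) \<in> C_states b p I" "(s, t) \<noteq> C_init"
  shows "t \<noteq> Some 0"
proof
  assume t: "t = Some 0"
  obtain u where "C_run b p I C_init u = (s, t)" using assms(2) unfolding C_states_def by auto
  then have "foldl (C_step b p I) (0, Some 0) u = (s, Some 0)" using t by (simp add: C_run_def C_init_def)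
  then have "s = 0" using init_only[OF assms(1)] by blast
  then show False using assms(3) t by (simp add: C_init_def)
qed

theorem lemma42:
  fixes b p :: nat and R I :: "nat set" and s t s' t'
  assumes "b > 1" and "p \<ge> 1" and "R \<subseteq> {0..<p}"
    and "finite I" and "I \<noteq> {}"
    and "(s, t) \<in> C_states b p I" and "(s', t') \<in> C_states b p I"
    and "s mod coprime_part b p = s' mod coprime_part b p"
    and "(s, t) \<noteq> C_init" and "(s', t') \<noteq> C_init"
  shows "ult_equiv b p I (s, t) (s', t')"
proof -
  have p0: "p > 0" using assms(2) by simp
  have t0: "t \<noteq> Some 0" using not_some0[of b s t p I] assms(1,6,9) by simp
  have t0': "t' \<noteq> Some 0" using not_some0[of b s' t' p I] assms(1,7,10) by simp
  obtain n where n: "coprime_part b p * gcd p (b^n) = p" using split_p[OF p0] by blast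
  define m where "m = n + Max I + 1"
  show ?thesis unfolding ult_equiv_def
  proof (intro exI[of _ m] conjI ballI impI)
    show "1 \<le> m" by (simp add: m_def)
    fix w assume "w \<in> words b" "m \<le> length w"
    then have L: "length w > Max I" "length w \<ge> n" "w \<noteq> []" by (auto simp: m_def)
    have B: "foldl (B_step b I) t w = foldl (B_step b I) t' w"
      using B_dies[OF assms(1) t0 L(1)] B_dies[OF assms(1) t0' L(1)] by simp
    have e: "s * b ^ length w mod p = s' * b ^ length w mod p"
      by (rule A_eq[OF n _ assms(8) L(2)]) simp
    have "foldl (A_step b p) s w mod p = foldl (A_step b p) s' w mod p"
      unfolding A_fold by (metis e mod_add_left_eq)
    then have A: "foldl (A_step b p) s w = foldl (A_step b p) s' w"
      using A_lt[OF p0 L(3)] by (metis mod_less)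
    show "C_run b p I (s, t) w = C_run b p I (s', t') w"
      unfolding run_pair using A B by simp
  qed
qed

end
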